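(* Let $\mathcal{H}$ be a finite-dimensional Hilbert space, $\{\rho_\theta;\theta\in\Theta\subset\mathbb{R}^d\}$ a smooth family of density operators, $\theta_0\in\Theta$ with $\rho=\rho_{\theta_0}$ strictly positive, and let $\{D_j^{(S)}\}_{j=1}^r$ be a basis of a $\mathcal{D}_\rho$ invariant extension of the SLD tangent space with $D_i^{(S)}=L_i^{(S)}$ for $1\le i\le d$. Let $\Sigma_{ij}=\operatorname{Tr}\rho D_j^{(S)}D_i^{(S)}$, $R=(\operatorname{Re}\Sigma)^{-1}\Sigma(\operatorname{Re}\Sigma)^{-1}=\begin{pmatrix}R_1&R_2^*\\R_2&R_3\end{pmatrix}$ with $R_1$ of size $d\times d$, $R_2$ of size $(r-d)\times d$, $R_3$ of size $(r-d)\times(r-d)$. For $\beta\in[0,1]$ let $D_i^{(\beta)}=(I+\beta\sqrt{-1}\mathcal{D}_\rho)^{-1}(D_i^{(S)})$ ($1\le i\le r$) and $\tilde J^{(\beta)}_{\theta_0}=[\langle D_i^{(\beta)},D_j^{(\beta)}\rangle^{(\beta)}]_{1\le i,j\le r}$. Then $$(\tilde J^{(\beta)}_{\theta_0})^{-1}=\operatorname{Re}R+\beta\sqrt{-1}\operatorname{Im}R,$$ and $$(J^{(\beta)}_{\theta_0})^{-1}=R_1^{(\beta)}-R_2^{(\beta)*}(R_3^{(\beta)})^{-1}R_2^{(\beta)},$$ where $R_k^{(\beta)}=\operatorname{Re}R_k+\beta\sqrt{-1}\operatorname{Im}R_k$ for $k=1,2,3$.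
   Context: $\partial_i\rho=\frac{\partial}{\partial\theta^i}\rho_\theta|_{\theta=\theta_0}$. SLDs $L_i^{(S)}$: Hermitian with $\partial_i\rho=\frac12(\rho L_i^{(S)}+L_i^{(S)}\rho)$, assumed linearly independent; SLD tangent space $\mathcal{T}=\operatorname{span}_{\mathbb{R}}\{L_i^{(S)}\}$. Commutation operator: $\mathcal{D}_\rho(X)\rho+\rho\mathcal{D}_\rho(X)=\sqrt{-1}(X\rho-\rho X)$; a $\mathcal{D}_\rho$ invariant extension of $\mathcal{T}$ is a real subspace of Hermitian operators containing $\mathcal{T}$ and mapped into itself by $\mathcal{D}_\rho$. Inner product on $\mathcal{B}(\mathcal{H})$: $\langle X,Y\rangle^{(\beta)}=\frac12\operatorname{Tr}X^*\{(1+\beta)\rho Y+(1-\beta)Y\rho\}$. The $\beta$ logarithmic derivatives $L_i^{(\beta)}$ are defined by $\partial_i\rho=\frac{1+\beta}{2}\rho L_i^{(\beta)}+\frac{1-\beta}{2}L_i^{(\beta)}\rho$, and $J^{(\beta)}_{\theta_0}=[\langle L_i^{(\beta)},L_j^{(\beta)}\rangle^{(\beta)}]_{ij}$. Re, Im are entrywise. *)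

theory Defs
  imports "HOL-Analysis.Analysis" "Jordan_Normal_Form.Gauss_Jordan_Elimination"
begin

no_notation Matrix.vec_index (infixl \<open>$\<close> 100)

text \<open>The r x r (and d x d) Gram-type
  matrices of the paper are Jordan_Normal_Form matrices of type complex mat,
  indexed from 0.\<close>

type_synonym 'n op = "complex^'n^'n"

definition op_smult :: "complex \<Rightarrow> 'n::finite op \<Rightarrow> 'n op" (infixr "*:" 75) where
  "c *: A = (\<chi> i j. c * A $ i $ j)"

definition op_adj :: "'n::finite op \<Rightarrow> 'n op" where
  "op_adj A = (\<chi> i j. cnj (A $ j $ i))"

definition hermitian_op :: "'n::finite op \<Rightarrow> bool" where
  "hermitian_op A \<longleftrightarrow> op_adj A = A"

definition qform :: "'n::finite op \<Rightarrow> complex^'n \<Rightarrow> complex" where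
  "qform A x = (\<Sum>i\<in>UNIV. cnj (x $ i) * (A *v x) $ i)"

definition density_op :: "'n::finite op \<Rightarrow> bool" where
  "density_op A \<longleftrightarrow> hermitian_op A \<and> (\<forall>x. 0 \<le> Re (qform A x)) \<and> trace A = 1"

definition strictly_positive :: "'n::finite op \<Rightarrow> bool" where
  "strictly_positive A \<longleftrightarrow> hermitian_op A \<and> (\<forall>x. x \<noteq> 0 \<longrightarrow> 0 < Re (qform A x))"

definition comm_op :: "'n::finite op \<Rightarrow> 'n op \<Rightarrow> 'n op" where
  "comm_op \<rho> X = (THE Y. Y ** \<rho> + \<rho> ** Y = \<i> *: (X ** \<rho> - \<rho> ** X))"

definition beta_ip :: "real \<Rightarrow> 'n::finite op \<Rightarrow> 'n op \<Rightarrow> 'n op \<Rightarrow> complex" where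
  "beta_ip \<beta> \<rho> X Y = (1/2) * trace (op_adj X ** (complex_of_real (1 + \<beta>) *: (\<rho> ** Y)
                                        + complex_of_real (1 - \<beta>) *: (Y ** \<rho>)))"

definition beta_logder :: "real \<Rightarrow> 'n::finite op \<Rightarrow> 'n op \<Rightarrow> 'n op" where
  "beta_logder \<beta> \<rho> dR = (THE L. dR = complex_of_real ((1 + \<beta>)/2) *: (\<rho> ** L)
                                       + complex_of_real ((1 - \<beta>)/2) *: (L ** \<rho>))"

abbreviation SLD :: "'n::finite op \<Rightarrow> 'n op \<Rightarrow> 'n op" where
  "SLD \<equiv> beta_logder 0"

definition beta_transform :: "real \<Rightarrow> 'n::finite op \<Rightarrow> 'n op \<Rightarrow> 'n op" where
  "beta_transform \<beta> \<rho> X = (THE Y. Y + (complex_of_real \<beta> * \<i>) *: comm_op \<rho> Y = X)"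

definition ReM :: "complex mat \<Rightarrow> complex mat" where
  "ReM A = map_mat (\<lambda>z. complex_of_real (Re z)) A"

definition ImM :: "complex mat \<Rightarrow> complex mat" where
  "ImM A = map_mat (\<lambda>z. complex_of_real (Im z)) A"

definition adjM :: "complex mat \<Rightarrow> complex mat" where
  "adjM A = Matrix.mat (dim_col A) (dim_row A) (\<lambda>(i,j). cnj (A $$ (j,i)))"

definition beta_part :: "real \<Rightarrow> complex mat \<Rightarrow> complex mat" where
  "beta_part \<beta> A = ReM A + (complex_of_real \<beta> * \<i>) \<cdot>\<^sub>m ImM A"

definition minv :: "complex mat \<Rightarrow> complex mat" where
  "minv A = the (mat_inverse A)"

end

theory Submission
  imports Defs "Jordan_Normal_Form.Determinant"
begin

no_notation Matrix.vec_index (infixl \<open>$\<close> 100)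

lemma mat_inverse_SomeI:
  fixes A B :: "'a::field mat"
  assumes A: "A \<in> carrier_mat n n" and B: "B \<in> carrier_mat n n" and AB: "A * B = 1\<^sub>m n"
  shows "mat_inverse A = Some B"
proof -
  have BA: "B * A = 1\<^sub>m n" using mat_mult_left_right_inverse[OF A B AB] .
  have U: "A \<in> Units (ring_mat TYPE('a) n ())"
    using A B AB BA unfolding Units_def ring_mat_def by auto
  show ?thesis
  proof (cases "mat_inverse A")
    case None with mat_inverse(1)[OF A None, of "()"] U show ?thesis by blast
  next
    case (Some C)
    from mat_inverse(2)[OF A Some] have AC: "A * C = 1\<^sub>m n" and C: "C \<in> carrier_mat n n" by auto
    have "B = B * (A * C)" using B by (simp add: AC)
    also have "\<dots> = (B * A) * C" using A B C by (simp add: assoc_mult_mat)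
    also have "\<dots> = C" using C BA by simp
    finally show ?thesis using Some by simp
  qed
qed

lemma inj_mat_inverse:
  fixes A :: "'a::field mat"
  assumes A: "A \<in> carrier_mat n n" and inj: "\<And>v. v \<in> carrier_vec n \<Longrightarrow> A *\<^sub>v v = 0\<^sub>v n \<Longrightarrow> v = 0\<^sub>v n"
  shows "\<exists>B. B \<in> carrier_mat n n \<and> A * B = 1\<^sub>m n \<and> mat_inverse A = Some B"
proof -
  have "Determinant.det A \<noteq> 0" using det_0_iff_vec_prod_zero[OF A] inj by auto
  hence U: "A \<in> Units (ring_mat TYPE('a) n ())" by (rule det_non_zero_imp_unit[OF A])
  then obtain B where "mat_inverse A = Some B" using mat_inverse(1)[OF A, of "()"] by (cases "mat_inverse A") auto
  thus ?thesis using mat_inverse(2)[OF A] by auto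
qed

lemma four_block_eqD:
  assumes eq: "four_block_mat A1 A2 A3 A4 = four_block_mat B1 B2 B3 B4"
    and c: "A1 \<in> carrier_mat n1 m1" "B1 \<in> carrier_mat n1 m1" "A2 \<in> carrier_mat n1 m2" "B2 \<in> carrier_mat n1 m2"
     "A3 \<in> carrier_mat n2 m1" "B3 \<in> carrier_mat n2 m1" "A4 \<in> carrier_mat n2 m2" "B4 \<in> carrier_mat n2 m2"
  shows "A1 = B1" "A2 = B2" "A3 = B3" "A4 = B4"
proof -
  have e: "four_block_mat A1 A2 A3 A4 $$ (i,j) = four_block_mat B1 B2 B3 B4 $$ (i,j)" for i j
    using eq by simp
  show "A1 = B1"
  proof (rule eq_matI)
    fix i j assume "i < dim_row B1" "j < dim_col B1"
    thus "A1 $$ (i,j) = B1 $$ (i,j)" using e[of i j] c by auto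
  qed (use c in auto)
  show "A2 = B2"
  proof (rule eq_matI)
    fix i j assume "i < dim_row B2" "j < dim_col B2"
    thus "A2 $$ (i,j) = B2 $$ (i,j)" using e[of i "j + m1"] c by auto
  qed (use c in auto)
  show "A3 = B3"
  proof (rule eq_matI)
    fix i j assume "i < dim_row B3" "j < dim_col B3"
    thus "A3 $$ (i,j) = B3 $$ (i,j)" using e[of "i + n1" j] c by auto
  qed (use c in auto)
  show "A4 = B4"
  proof (rule eq_matI)
    fix i j assume "i < dim_row B4" "j < dim_col B4"
    thus "A4 $$ (i,j) = B4 $$ (i,j)" using e[of "i + n1" "j + m1"] c by auto
  qed (use c in auto)
qed

lemma block_decomp:
  fixes M :: "'a mat"
  assumes M: "M \<in> carrier_mat (d + e) (d + e)"
  shows "M = four_block_mat (mat d d (\<lambda>(i,j). M $$ (i,j))) (mat d e (\<lambda>(i,j). M $$ (i, d + j)))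
     (mat e d (\<lambda>(i,j). M $$ (d + i, j))) (mat e e (\<lambda>(i,j). M $$ (d + i, d + j)))"
  by (rule eq_matI) (use M in auto)

lemma schur:
  fixes M P :: "complex mat"
  assumes M: "M \<in> carrier_mat (d + e) (d + e)" and P: "P \<in> carrier_mat (d + e) (d + e)"
    and MP: "M * P = 1\<^sub>m (d + e)"
    and inj: "\<And>v. v \<in> carrier_vec d \<Longrightarrow> mat d d (\<lambda>(i,j). M $$ (i,j)) *\<^sub>v v = 0\<^sub>v d \<Longrightarrow> v = 0\<^sub>v d"
  shows "mat_inverse (mat e e (\<lambda>(i,j). P $$ (d + i, d + j))) \<noteq> None
    \<and> mat_inverse (mat d d (\<lambda>(i,j). M $$ (i,j))) = Some (mat d d (\<lambda>(i,j). P $$ (i,j))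
       - mat d e (\<lambda>(i,j). P $$ (i, d + j)) * minv (mat e e (\<lambda>(i,j). P $$ (d + i, d + j)))
         * mat e d (\<lambda>(i,j). P $$ (d + i, j)))"
proof -
  define M1 where "M1 = mat d d (\<lambda>(i,j). M $$ (i,j))"
  define M2 where "M2 = mat d e (\<lambda>(i,j). M $$ (i, d + j))"
  define M3 where "M3 = mat e d (\<lambda>(i,j). M $$ (d + i, j))"
  define M4 where "M4 = mat e e (\<lambda>(i,j). M $$ (d + i, d + j))"
  define P1 where "P1 = mat d d (\<lambda>(i,j). P $$ (i,j))"
  define P2 where "P2 = mat d e (\<lambda>(i,j). P $$ (i, d + j))"
  define P3 where "P3 = mat e d (\<lambda>(i,j). P $$ (d + i, j))"
  define P4 where "P4 = mat e e (\<lambda>(i,j). P $$ (d + i, d + j))"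
  have c: "M1 \<in> carrier_mat d d" "M2 \<in> carrier_mat d e" "M3 \<in> carrier_mat e d" "M4 \<in> carrier_mat e e"
    "P1 \<in> carrier_mat d d" "P2 \<in> carrier_mat d e" "P3 \<in> carrier_mat e d" "P4 \<in> carrier_mat e e"
    unfolding M1_def M2_def M3_def M4_def P1_def P2_def P3_def P4_def by auto
  have Md: "M = four_block_mat M1 M2 M3 M4" unfolding M1_def M2_def M3_def M4_def by (rule block_decomp[OF M])
  have Pd: "P = four_block_mat P1 P2 P3 P4" unfolding P1_def P2_def P3_def P4_def by (rule block_decomp[OF P])
  have "four_block_mat (M1 * P1 + M2 * P3) (M1 * P2 + M2 * P4) (M3 * P1 + M4 * P3) (M3 * P2 + M4 * P4)
     = four_block_mat (1\<^sub>m d) (0\<^sub>m d e) (0\<^sub>m e d) (1\<^sub>m e)"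
    using MP unfolding Md Pd by (simp add: mult_four_block_mat[OF c])
  note E = four_block_eqD[OF this, of d d e e]
  have E1: "M1 * P1 + M2 * P3 = 1\<^sub>m d" by (rule E(1)) (use c in auto)
  have E2: "M1 * P2 + M2 * P4 = 0\<^sub>m d e" by (rule E(2)) (use c in auto)
  have E4: "M3 * P2 + M4 * P4 = 1\<^sub>m e" by (rule E(4)) (use c in auto)
  have inj4: "v = 0\<^sub>v e" if v: "v \<in> carrier_vec e" and Pv: "P4 *\<^sub>v v = 0\<^sub>v e" for v
  proof -
    have "(M1 * P2 + M2 * P4) *\<^sub>v v = 0\<^sub>v d" unfolding E2 using v by (intro eq_vecI) auto
    moreover have "(M1 * P2 + M2 * P4) *\<^sub>v v = (M1 * P2) *\<^sub>v v + (M2 * P4) *\<^sub>v v"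
      by (rule add_mult_distrib_mat_vec[of _ d e]) (use c v in auto)
    ultimately have "M1 *\<^sub>v (P2 *\<^sub>v v) + M2 *\<^sub>v (P4 *\<^sub>v v) = 0\<^sub>v d"
      using assoc_mult_mat_vec[of M1 d d P2 e v] assoc_mult_mat_vec[of M2 d e P4 e v] c v by simp
    moreover have "M2 *\<^sub>v 0\<^sub>v e = 0\<^sub>v d" by (intro eq_vecI) (use c in auto)
    moreover have "M1 *\<^sub>v (P2 *\<^sub>v v) \<in> carrier_vec d" using mult_mat_vec_carrier[OF c(1) mult_mat_vec_carrier[OF c(6) v]] .
    ultimately have "M1 *\<^sub>v (P2 *\<^sub>v v) = 0\<^sub>v d" using Pv by simp
    hence P2v: "P2 *\<^sub>v v = 0\<^sub>v d" using inj[of "P2 *\<^sub>v v"] mult_mat_vec_carrier[OF c(6) v] unfolding M1_def by blast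
    have "v = (M3 * P2 + M4 * P4) *\<^sub>v v" using E4 v by simp
    also have "\<dots> = (M3 * P2) *\<^sub>v v + (M4 * P4) *\<^sub>v v"
      by (rule add_mult_distrib_mat_vec[of _ e e]) (use c v in auto)
    also have "\<dots> = M3 *\<^sub>v (P2 *\<^sub>v v) + M4 *\<^sub>v (P4 *\<^sub>v v)"
      using assoc_mult_mat_vec[of M3 e d P2 e v] assoc_mult_mat_vec[of M4 e e P4 e v] c v by simp
    also have "\<dots> = 0\<^sub>v e" using P2v Pv c by (intro eq_vecI) auto
    finally show ?thesis .
  qed
  obtain Q where Q: "Q \<in> carrier_mat e e" "P4 * Q = 1\<^sub>m e" "mat_inverse P4 = Some Q"
    using inj_mat_inverse[OF c(8) inj4] by blast
  have mQ: "minv P4 = Q" using Q(3) by (simp add: minv_def)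
  have M1P2: "M1 * P2 = - (M2 * P4)"
  proof (rule eq_matI)
    fix i j assume ij: "i < dim_row (- (M2 * P4))" "j < dim_col (- (M2 * P4))"
    have "(M1 * P2 + M2 * P4) $$ (i,j) = 0" using E2 ij c by simp
    thus "(M1 * P2) $$ (i,j) = (- (M2 * P4)) $$ (i,j)" using ij c by (simp add: eq_neg_iff_add_eq_0)
  qed (use c in auto)
  have "M1 * (P1 - P2 * Q * P3) = M1 * P1 - M1 * (P2 * Q * P3)"
    by (rule mult_minus_distrib_mat[of _ d d _ d]) (use c Q in auto)
  also have "M1 * (P2 * Q * P3) = ((M1 * P2) * Q) * P3"
    using c Q by (simp add: assoc_mult_mat[of _ d d _ e _ d] assoc_mult_mat[of _ d e _ e _ d])
  also have "\<dots> = - (M2 * P3)"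
  proof -
    have "((M1 * P2) * Q) * P3 = - (((M2 * P4) * Q) * P3)" using c Q by (simp add: M1P2 carrier_matD)
    also have "((M2 * P4) * Q) * P3 = M2 * P3"
    proof -
      have "((M2 * P4) * Q) * P3 = (M2 * (P4 * Q)) * P3" using c Q by (simp add: assoc_mult_mat[of _ d e _ e _ e])
      also have "\<dots> = M2 * P3" using c Q by simp
      finally show ?thesis .
    qed
    finally show ?thesis .
  qed
  also have "M1 * P1 - - (M2 * P3) = M1 * P1 + M2 * P3" by (rule eq_matI) (use c in auto)
  also have "\<dots> = 1\<^sub>m d" by (rule E1)
  finally have "M1 * (P1 - P2 * Q * P3) = 1\<^sub>m d" .
  hence "mat_inverse M1 = Some (P1 - P2 * Q * P3)"
    by (intro mat_inverse_SomeI[OF c(1)]) (use c Q in auto)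
  thus ?thesis using Q(3) mQ unfolding M1_def P1_def P2_def P3_def P4_def by simp
qed

lemma op_smult_nth[simp]: "(c *: A) $ i $ j = c * A $ i $ j"
  by (simp add: op_smult_def)

lemma op_adj_nth[simp]: "op_adj A $ i $ j = cnj (A $ j $ i)"
  by (simp add: op_adj_def)

lemma mm_nth: "(A ** B) $ i $ j = (\<Sum>k\<in>UNIV. A $ i $ k * B $ k $ j)"
  by (simp add: matrix_matrix_mult_def)

lemma op_eqI:
  assumes "\<And>i j. (A::'n::finite op) $ i $ j = B $ i $ j" shows "A = B"
proof -
  have "\<forall>i. A $ i = B $ i" using assms by (simp add: Finite_Cartesian_Product.vec_eq_iff)
  thus ?thesis by (simp add: Finite_Cartesian_Product.vec_eq_iff)
qed

lemma sum_nth2[simp]: "(sum f S) $ i $ j = sum (\<lambda>x. f x $ i $ j) S"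
  by (simp add: sum_component)

lemma mm_add_left: "((A::'n::finite op) + B) ** (C::'n op) = A ** C + B ** C"
  by (rule op_eqI) (simp add: mm_nth algebra_simps sum.distrib)
lemma mm_add_right: "(A::'n::finite op) ** (B + C :: 'n op) = A ** B + A ** C"
  by (rule op_eqI) (simp add: mm_nth algebra_simps sum.distrib)
lemma mm_diff_left: "((A::'n::finite op) - B) ** (C::'n op) = A ** C - B ** C"
  by (rule op_eqI) (simp add: mm_nth algebra_simps sum_subtractf)
lemma mm_diff_right: "(A::'n::finite op) ** (B - C :: 'n op) = A ** B - A ** C"
  by (rule op_eqI) (simp add: mm_nth algebra_simps sum_subtractf)
lemma mm_smult_left: "(c *: (A::'n::finite op)) ** (B::'n op) = c *: (A ** B)"
  by (rule op_eqI) (simp add: mm_nth sum_distrib_left algebra_simps)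
lemma mm_smult_right: "(A::'n::finite op) ** (c *: (B::'n op)) = c *: (A ** B)"
  by (rule op_eqI) (simp add: mm_nth sum_distrib_left algebra_simps)
lemma mm_sum_left: "(sum f S :: 'n op) ** (B::'n::finite op) = sum (\<lambda>x. f x ** B) S"
  by (rule op_eqI) (simp add: mm_nth sum_distrib_right sum.swap[of _ UNIV S])
lemma mm_sum_right: "(B::'n::finite op) ** (sum f S :: 'n op) = sum (\<lambda>x. B ** f x) S"
  by (rule op_eqI) (simp add: mm_nth sum_distrib_left sum.swap[of _ UNIV S])

lemma smult_add: "c *: ((A::'n::finite op) + B) = c *: A + c *: B"
  by (rule op_eqI) (simp add: algebra_simps)
lemma smult_diff: "c *: ((A::'n::finite op) - B) = c *: A - c *: B"
  by (rule op_eqI) (simp add: algebra_simps)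
lemma add_smult: "(c + d) *: (A::'n::finite op) = c *: A + d *: A"
  by (rule op_eqI) (simp add: algebra_simps)
lemma smult_smult: "c *: (d *: (A::'n::finite op)) = (c * d) *: A"
  by (rule op_eqI) simp
lemma one_smult[simp]: "1 *: (A::'n::finite op) = A"
  by (rule op_eqI) simp
lemma zero_smult[simp]: "0 *: (A::'n::finite op) = 0"
  by (rule op_eqI) simp
lemma smult_zero[simp]: "c *: (0::'n::finite op) = 0"
  by (rule op_eqI) simp
lemma smult_sum: "c *: (sum f S :: 'n::finite op) = sum (\<lambda>x. c *: f x) S"
  by (rule op_eqI) (simp add: sum_distrib_left)
lemma scaleR_op: "r *\<^sub>R (A::'n::finite op) = complex_of_real r *: A"
proof (rule op_eqI)
  fix i j
  have "(r *\<^sub>R A) $ i $ j = r *\<^sub>R (A $ i $ j)" by simp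
  also have "\<dots> = complex_of_real r * A $ i $ j" by (rule scaleR_conv_of_real)
  finally show "(r *\<^sub>R A) $ i $ j = (complex_of_real r *: A) $ i $ j" by simp
qed

lemma op_adj_mm: "op_adj ((A::'n::finite op) ** B) = op_adj B ** op_adj A"
  by (rule op_eqI) (simp add: mm_nth mult.commute)
lemma op_adj_add: "op_adj ((A::'n::finite op) + B) = op_adj A + op_adj B"
  by (rule op_eqI) simp
lemma op_adj_diff: "op_adj ((A::'n::finite op) - B) = op_adj A - op_adj B"
  by (rule op_eqI) simp
lemma op_adj_smult: "op_adj (c *: (A::'n::finite op)) = cnj c *: op_adj A"
  by (rule op_eqI) simp
lemma op_adj_sum: "op_adj (sum f S :: 'n::finite op) = sum (\<lambda>x. op_adj (f x)) S"
  by (rule op_eqI) simp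
lemma op_adj_adj[simp]: "op_adj (op_adj (A::'n::finite op)) = A"
  by (rule op_eqI) simp
lemma op_adj_zero[simp]: "op_adj (0::'n::finite op) = 0"
  by (rule op_eqI) simp

lemma trace_smult: "trace (c *: (A::'n::finite op)) = c * trace A"
  by (simp add: trace_def sum_distrib_left)
lemma trace_sum: "trace (sum f S :: 'n::finite op) = sum (\<lambda>x. trace (f x)) S"
  unfolding trace_def by (simp add: sum.swap[of _ UNIV S])
lemma trace_adj: "trace (op_adj (A::'n::finite op)) = cnj (trace A)"
  by (simp add: trace_def)

definition ip :: "'n::finite op \<Rightarrow> 'n op \<Rightarrow> complex" where
  "ip X Y = trace (op_adj X ** Y)"

lemma ip_add_right: "ip X (Y + Z) = ip X Y + ip X Z"
  by (simp add: ip_def mm_add_right trace_add)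
lemma ip_diff_right: "ip X (Y - Z) = ip X Y - ip X Z"
  by (simp add: ip_def mm_diff_right trace_sub)
lemma ip_smult_right: "ip X (c *: Y) = c * ip X Y"
  by (simp add: ip_def mm_smult_right trace_smult)
lemma ip_add_left: "ip (X + Y) Z = ip X Z + ip Y Z"
  by (simp add: ip_def op_adj_add mm_add_left trace_add)
lemma ip_smult_left: "ip (c *: X) Y = cnj c * ip X Y"
  by (simp add: ip_def op_adj_smult mm_smult_left trace_smult)
lemma ip_sum_right: "ip X (sum f S) = sum (\<lambda>x. ip X (f x)) S"
  by (simp add: ip_def mm_sum_right trace_sum)
lemma ip_sum_left: "ip (sum f S) Y = sum (\<lambda>x. ip (f x) Y) S"
  by (simp add: ip_def op_adj_sum mm_sum_left trace_sum)

lemma ip_col: "ip X (\<rho> ** X) = (\<Sum>j\<in>UNIV. qform \<rho> (\<chi> k. X $ k $ j))"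
  by (simp add: ip_def trace_def mm_nth qform_def matrix_vector_mult_def)

lemma qform_zero: "qform A 0 = 0"
  by (simp add: qform_def)

lemma pos1:
  assumes sp: "strictly_positive \<rho>" and X: "X \<noteq> 0"
  shows "0 < Re (ip X (\<rho> ** X))"
proof -
  from X obtain k j where kj: "X $ k $ j \<noteq> 0" by (metis op_eqI zero_index)
  have nn: "0 \<le> Re (qform \<rho> (\<chi> k. X $ k $ j))" for j
  proof (cases "(\<chi> k. X $ k $ j) = 0")
    case True thus ?thesis by (simp add: qform_zero)
  next
    case False thus ?thesis using sp unfolding strictly_positive_def by (simp add: less_imp_le)
  qed
  have "(\<chi> k. X $ k $ j) \<noteq> 0" using kj by (metis vec_lambda_beta zero_index)
  hence "0 < Re (qform \<rho> (\<chi> k. X $ k $ j))" using sp unfolding strictly_positive_def by simp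
  hence "0 < (\<Sum>j\<in>UNIV. Re (qform \<rho> (\<chi> k. X $ k $ j)))"
    by (intro sum_pos2[where i=j]) (auto intro: nn)
  thus ?thesis by (simp add: ip_col Re_sum)
qed

lemma op_adj_eq0: "op_adj X = 0 \<longleftrightarrow> (X::'n::finite op) = 0"
  by (metis op_adj_adj op_adj_zero)

lemma ip_right_rho: "ip X (X ** \<rho>) = ip (op_adj X) (\<rho> ** op_adj X)"
proof -
  have "ip X (X ** \<rho>) = trace ((X ** \<rho>) ** op_adj X)" unfolding ip_def by (rule trace_mul_sym)
  also have "\<dots> = ip (op_adj X) (\<rho> ** op_adj X)" unfolding ip_def op_adj_adj by (simp add: matrix_mul_assoc)
  finally show ?thesis .
qed

lemma pos2:
  assumes sp: "strictly_positive \<rho>" and X: "X \<noteq> 0"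
  shows "0 < Re (ip X (X ** \<rho>))"
  using pos1[OF sp, of "op_adj X"] X by (simp add: ip_right_rho op_adj_eq0)


definition Sab :: "complex \<Rightarrow> complex \<Rightarrow> 'n::finite op \<Rightarrow> 'n op \<Rightarrow> 'n op" where
  "Sab a b \<rho> Y = a *: (\<rho> ** Y) + b *: (Y ** \<rho>)"

lemma Sab_add: "Sab a b \<rho> (X + Y) = Sab a b \<rho> X + Sab a b \<rho> Y"
  by (simp add: Sab_def mm_add_right mm_add_left smult_add algebra_simps)
lemma Sab_diff: "Sab a b \<rho> (X - Y) = Sab a b \<rho> X - Sab a b \<rho> Y"
  by (simp add: Sab_def mm_diff_right mm_diff_left smult_diff algebra_simps)
lemma Sab_smult: "Sab a b \<rho> (c *: X) = c *: Sab a b \<rho> X"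
  by (simp add: Sab_def mm_smult_right mm_smult_left smult_smult smult_add mult.commute)
lemma Sab_zero[simp]: "Sab a b \<rho> 0 = 0"
  by (simp add: Sab_def)

lemma ip_zero_right[simp]: "ip X 0 = 0"
  by (simp add: ip_def trace_def)

lemma Sab_inj0:
  assumes sp: "strictly_positive \<rho>" and ab: "0 \<le> a" "0 \<le> b" "0 < a + b"
    and S: "Sab (complex_of_real a) (complex_of_real b) \<rho> Y = 0"
  shows "Y = 0"
proof (rule ccontr)
  assume Y: "Y \<noteq> 0"
  have p: "0 < Re (ip Y (\<rho> ** Y))" and q: "0 < Re (ip Y (Y ** \<rho>))"
    using pos1[OF sp Y] pos2[OF sp Y] by auto
  have "ip Y (Sab (complex_of_real a) (complex_of_real b) \<rho> Y)
      = complex_of_real a * ip Y (\<rho> ** Y) + complex_of_real b * ip Y (Y ** \<rho>)"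
    by (simp add: Sab_def ip_add_right ip_smult_right)
  hence "Re (ip Y (Sab (complex_of_real a) (complex_of_real b) \<rho> Y))
      = a * Re (ip Y (\<rho> ** Y)) + b * Re (ip Y (Y ** \<rho>))" by simp
  moreover have "0 < a * Re (ip Y (\<rho> ** Y)) + b * Re (ip Y (Y ** \<rho>))"
  proof (cases "0 < a")
    case True
    thus ?thesis using p q ab by (simp add: add_pos_nonneg)
  next
    case False
    hence "0 < b" using ab by simp
    thus ?thesis using p q ab by (simp add: add_nonneg_pos)
  qed
  ultimately show False using S by simp
qed

lemma Sab_inj:
  assumes sp: "strictly_positive \<rho>" and ab: "0 \<le> a" "0 \<le> b" "0 < a + b"
    and S: "Sab (complex_of_real a) (complex_of_real b) \<rho> X = Sab (complex_of_real a) (complex_of_real b) \<rho> Y"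
  shows "X = Y"
proof -
  have "Sab (complex_of_real a) (complex_of_real b) \<rho> (X - Y) = 0" using S by (simp add: Sab_diff)
  hence "X - Y = 0" by (rule Sab_inj0[OF sp ab])
  thus ?thesis by simp
qed

lemma Sab_linear: "linear (Sab a b \<rho>)"
  by (rule linearI) (simp_all add: Sab_add scaleR_op Sab_smult)

lemma Sab_surj:
  assumes sp: "strictly_positive \<rho>" and ab: "0 \<le> a" "0 \<le> b" "0 < a + b"
  shows "\<exists>Y. Sab (complex_of_real a) (complex_of_real b) \<rho> Y = X"
proof -
  have "inj (Sab (complex_of_real a) (complex_of_real b) \<rho>)"
    by (rule injI) (rule Sab_inj[OF sp ab])
  hence "surj (Sab (complex_of_real a) (complex_of_real b) \<rho>)"
    by (rule eucl.linear_inj_imp_surj[OF Sab_linear])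
  thus ?thesis by (metis surjD)
qed

lemma comm_ex1:
  assumes sp: "strictly_positive \<rho>"
  shows "\<exists>!Y. Y ** \<rho> + \<rho> ** Y = \<i> *: (X ** \<rho> - \<rho> ** X)"
proof -
  have e: "Y ** \<rho> + \<rho> ** Y = Sab 1 1 \<rho> Y" for Y by (simp add: Sab_def)
  obtain Y where "Sab (complex_of_real 1) (complex_of_real 1) \<rho> Y = \<i> *: (X ** \<rho> - \<rho> ** X)"
    using Sab_surj[OF sp, of 1 1] by auto
  moreover have "Y1 = Y2" if "Sab (complex_of_real 1) (complex_of_real 1) \<rho> Y1 = Sab (complex_of_real 1) (complex_of_real 1) \<rho> Y2" for Y1 Y2
    by (rule Sab_inj[OF sp _ _ _ that]) auto
  ultimately show ?thesis unfolding e by (metis of_real_1)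
qed

lemma comm_eq:
  assumes sp: "strictly_positive \<rho>"
  shows "Sab 1 1 \<rho> (comm_op \<rho> X) = \<i> *: (X ** \<rho> - \<rho> ** X)"
proof -
  have "comm_op \<rho> X ** \<rho> + \<rho> ** comm_op \<rho> X = \<i> *: (X ** \<rho> - \<rho> ** X)"
    unfolding comm_op_def by (rule theI'[OF comm_ex1[OF sp]])
  thus ?thesis by (simp add: Sab_def add.commute)
qed

lemma Sab11_inj:
  assumes sp: "strictly_positive \<rho>" and "Sab 1 1 \<rho> X = Sab 1 1 \<rho> Y" shows "X = Y"
  by (rule Sab_inj[OF sp, of 1 1]) (use assms in auto)

lemma comm_unique:
  assumes sp: "strictly_positive \<rho>" and "Sab 1 1 \<rho> Y = \<i> *: (X ** \<rho> - \<rho> ** X)"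
  shows "comm_op \<rho> X = Y"
  by (rule Sab11_inj[OF sp]) (simp add: comm_eq[OF sp] assms)

lemma comm_add:
  assumes sp: "strictly_positive \<rho>"
  shows "comm_op \<rho> (X + Y) = comm_op \<rho> X + comm_op \<rho> Y"
  by (rule comm_unique[OF sp]) (simp add: Sab_add comm_eq[OF sp] mm_add_left mm_add_right smult_add smult_diff algebra_simps)

lemma comm_smult:
  assumes sp: "strictly_positive \<rho>"
  shows "comm_op \<rho> (c *: X) = c *: comm_op \<rho> X"
  by (rule comm_unique[OF sp]) (simp add: Sab_smult comm_eq[OF sp] mm_smult_left mm_smult_right smult_smult smult_diff mult.commute)

lemma comm_zero:
  assumes sp: "strictly_positive \<rho>"
  shows "comm_op \<rho> 0 = 0"
  using comm_smult[OF sp, of 0 0] by simp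

lemma lin_sum:
  assumes add: "\<And>X Y. f (X + Y) = f X + f Y" and sm: "\<And>c X. f (c *: X) = c *: f X"
    and fin: "finite S"
  shows "f (\<Sum>j\<in>S. c j *: (X j :: 'n::finite op)) = (\<Sum>j\<in>S. c j *: (f (X j) :: 'm::finite op))"
  using fin
proof (induction S rule: finite_induct)
  case empty
  have "f 0 = 0" using sm[of 0 0] by simp
  thus ?case by simp
next
  case (insert x F)
  thus ?case by (simp add: add sm)
qed


lemma K1:
  assumes sp: "strictly_positive \<rho>"
  shows "Sab 1 1 \<rho> (Y + (complex_of_real \<beta> * \<i>) *: comm_op \<rho> Y)
       = Sab (complex_of_real (1 + \<beta>)) (complex_of_real (1 - \<beta>)) \<rho> Y"
proof -
  have "Sab 1 1 \<rho> (Y + (complex_of_real \<beta> * \<i>) *: comm_op \<rho> Y)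
      = Sab 1 1 \<rho> Y + (complex_of_real \<beta> * \<i>) *: (\<i> *: (Y ** \<rho> - \<rho> ** Y))"
    by (simp add: Sab_add Sab_smult comm_eq[OF sp])
  also have "\<dots> = Sab (complex_of_real (1 + \<beta>)) (complex_of_real (1 - \<beta>)) \<rho> Y"
    by (rule op_eqI) (simp add: Sab_def algebra_simps)
  finally show ?thesis .
qed

lemma bt_ex1:
  assumes sp: "strictly_positive \<rho>" and b: "0 \<le> \<beta>" "\<beta> \<le> 1"
  shows "\<exists>!Y. Y + (complex_of_real \<beta> * \<i>) *: comm_op \<rho> Y = X"
proof -
  obtain Z where Z: "Sab (complex_of_real (1 + \<beta>)) (complex_of_real (1 - \<beta>)) \<rho> Z = Sab 1 1 \<rho> X"
  proof -
    have h: "0 \<le> 1 + \<beta>" "0 \<le> 1 - \<beta>" "0 < (1 + \<beta>) + (1 - \<beta>)" using b by auto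
    show ?thesis using Sab_surj[OF sp h, of "Sab 1 1 \<rho> X"] that by blast
  qed
  have ex: "Z + (complex_of_real \<beta> * \<i>) *: comm_op \<rho> Z = X"
    by (rule Sab11_inj[OF sp]) (use Z in \<open>simp add: K1[OF sp]\<close>)
  have un: "Y1 = Y2" if "Y1 + (complex_of_real \<beta> * \<i>) *: comm_op \<rho> Y1 = X"
     "Y2 + (complex_of_real \<beta> * \<i>) *: comm_op \<rho> Y2 = X" for Y1 Y2
  proof (rule Sab_inj[OF sp, of "1 + \<beta>" "1 - \<beta>"])
    show "Sab (complex_of_real (1 + \<beta>)) (complex_of_real (1 - \<beta>)) \<rho> Y1 =
          Sab (complex_of_real (1 + \<beta>)) (complex_of_real (1 - \<beta>)) \<rho> Y2"
      using K1[OF sp, of Y1 \<beta>] K1[OF sp, of Y2 \<beta>] that by simp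
  qed (use b in auto)
  show ?thesis using ex un by blast
qed

lemma bt_eq:
  assumes sp: "strictly_positive \<rho>" and b: "0 \<le> \<beta>" "\<beta> \<le> 1"
  shows "beta_transform \<beta> \<rho> X + (complex_of_real \<beta> * \<i>) *: comm_op \<rho> (beta_transform \<beta> \<rho> X) = X"
  unfolding beta_transform_def by (rule theI'[OF bt_ex1[OF sp b]])

lemma bt_unique:
  assumes sp: "strictly_positive \<rho>" and b: "0 \<le> \<beta>" "\<beta> \<le> 1"
    and "Y + (complex_of_real \<beta> * \<i>) *: comm_op \<rho> Y = X"
  shows "beta_transform \<beta> \<rho> X = Y"
  using bt_ex1[OF sp b, of X] bt_eq[OF sp b, of X] assms(4) by blast

lemma bt_Sab:
  assumes sp: "strictly_positive \<rho>" and b: "0 \<le> \<beta>" "\<beta> \<le> 1"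
  shows "Sab (complex_of_real (1 + \<beta>)) (complex_of_real (1 - \<beta>)) \<rho> (beta_transform \<beta> \<rho> X) = Sab 1 1 \<rho> X"
  using K1[OF sp, of "beta_transform \<beta> \<rho> X" \<beta>] bt_eq[OF sp b, of X] by simp

lemma bt_add:
  assumes sp: "strictly_positive \<rho>" and b: "0 \<le> \<beta>" "\<beta> \<le> 1"
  shows "beta_transform \<beta> \<rho> (X + Y) = beta_transform \<beta> \<rho> X + beta_transform \<beta> \<rho> Y"
proof (rule bt_unique[OF sp b])
  let ?c = "complex_of_real \<beta> * \<i>"
  have "beta_transform \<beta> \<rho> X + beta_transform \<beta> \<rho> Y + ?c *: comm_op \<rho> (beta_transform \<beta> \<rho> X + beta_transform \<beta> \<rho> Y)
     = (beta_transform \<beta> \<rho> X + ?c *: comm_op \<rho> (beta_transform \<beta> \<rho> X))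
       + (beta_transform \<beta> \<rho> Y + ?c *: comm_op \<rho> (beta_transform \<beta> \<rho> Y))"
    by (simp add: comm_add[OF sp] smult_add algebra_simps)
  also have "\<dots> = X + Y" by (simp add: bt_eq[OF sp b])
  finally show "beta_transform \<beta> \<rho> X + beta_transform \<beta> \<rho> Y + ?c *: comm_op \<rho> (beta_transform \<beta> \<rho> X + beta_transform \<beta> \<rho> Y) = X + Y" .
qed

lemma bt_smult:
  assumes sp: "strictly_positive \<rho>" and b: "0 \<le> \<beta>" "\<beta> \<le> 1"
  shows "beta_transform \<beta> \<rho> (c *: X) = c *: beta_transform \<beta> \<rho> X"
proof (rule bt_unique[OF sp b])
  let ?c = "complex_of_real \<beta> * \<i>"
  have "c *: beta_transform \<beta> \<rho> X + ?c *: comm_op \<rho> (c *: beta_transform \<beta> \<rho> X)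
     = c *: (beta_transform \<beta> \<rho> X + ?c *: comm_op \<rho> (beta_transform \<beta> \<rho> X))"
    by (simp add: comm_smult[OF sp] smult_add smult_smult mult.commute)
  also have "\<dots> = c *: X" by (simp add: bt_eq[OF sp b])
  finally show "c *: beta_transform \<beta> \<rho> X + ?c *: comm_op \<rho> (c *: beta_transform \<beta> \<rho> X) = c *: X" .
qed

lemma bt_comm:
  assumes sp: "strictly_positive \<rho>" and b: "0 \<le> \<beta>" "\<beta> \<le> 1"
  shows "comm_op \<rho> (beta_transform \<beta> \<rho> X) = beta_transform \<beta> \<rho> (comm_op \<rho> X)"
proof (rule bt_unique[OF sp b, symmetric])
  let ?c = "complex_of_real \<beta> * \<i>"
  have "comm_op \<rho> (beta_transform \<beta> \<rho> X) + ?c *: comm_op \<rho> (comm_op \<rho> (beta_transform \<beta> \<rho> X))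
      = comm_op \<rho> (beta_transform \<beta> \<rho> X + ?c *: comm_op \<rho> (beta_transform \<beta> \<rho> X))"
    by (simp add: comm_add[OF sp] comm_smult[OF sp])
  also have "\<dots> = comm_op \<rho> X" by (simp add: bt_eq[OF sp b])
  finally show "comm_op \<rho> (beta_transform \<beta> \<rho> X) + ?c *: comm_op \<rho> (comm_op \<rho> (beta_transform \<beta> \<rho> X)) = comm_op \<rho> X" .
qed

lemma bt_zero_imp:
  assumes sp: "strictly_positive \<rho>" and b: "0 \<le> \<beta>" "\<beta> \<le> 1"
    and "beta_transform \<beta> \<rho> X = 0"
  shows "X = 0"
  using bt_eq[OF sp b, of X] assms(4) by (simp add: comm_zero[OF sp])

lemma bl_iff:
  assumes sp: "strictly_positive \<rho>" and b: "0 \<le> \<beta>" "\<beta> \<le> 1"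
  shows "beta_logder \<beta> \<rho> dR = L \<longleftrightarrow>
     Sab (complex_of_real ((1 + \<beta>)/2)) (complex_of_real ((1 - \<beta>)/2)) \<rho> L = dR"
proof -
  let ?S = "Sab (complex_of_real ((1 + \<beta>)/2)) (complex_of_real ((1 - \<beta>)/2)) \<rho>"
  have e: "(dR = complex_of_real ((1 + \<beta>)/2) *: (\<rho> ** L') + complex_of_real ((1 - \<beta>)/2) *: (L' ** \<rho>))
     \<longleftrightarrow> ?S L' = dR" for L' by (auto simp: Sab_def)
  have h: "0 \<le> (1 + \<beta>)/2" "0 \<le> (1 - \<beta>)/2" "0 < (1 + \<beta>)/2 + (1 - \<beta>)/2" using b by (auto simp: field_simps)
  obtain Z where Z: "?S Z = dR" using Sab_surj[OF sp h, of dR] by blast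
  have un: "Y1 = Y2" if "?S Y1 = ?S Y2" for Y1 Y2
    by (rule Sab_inj[OF sp h that])
  have ex1: "\<exists>!L'. ?S L' = dR" using Z un by blast
  have "?S (beta_logder \<beta> \<rho> dR) = dR"
    unfolding beta_logder_def e by (rule theI'[OF ex1])
  thus ?thesis using un by auto
qed

lemma beta_ip_Sab:
  "beta_ip \<beta> \<rho> X Y = (1/2) * ip X (Sab (complex_of_real (1 + \<beta>)) (complex_of_real (1 - \<beta>)) \<rho> Y)"
  by (simp add: beta_ip_def ip_def Sab_def)

lemma Sab_half: "Sab (complex_of_real ((1 + \<beta>)/2)) (complex_of_real ((1 - \<beta>)/2)) \<rho> Y
   = (1/2) *: Sab (complex_of_real (1 + \<beta>)) (complex_of_real (1 - \<beta>)) \<rho> Y"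
  by (rule op_eqI) (simp add: Sab_def field_simps)

lemma mat_mult_index:
  assumes "A \<in> carrier_mat nr n" "B \<in> carrier_mat n nc" "i < nr" "j < nc"
  shows "(A * B) $$ (i,j) = (\<Sum>k<n. A $$ (i,k) * B $$ (k,j))"
  using assms by (simp add: scalar_prod_def atLeast0LessThan)

lemma mat_vec_index:
  assumes "A \<in> carrier_mat nr n" "v \<in> carrier_vec n" "i < nr"
  shows "vec_index (A *\<^sub>v v) i = (\<Sum>k<n. A $$ (i,k) * vec_index v k)"
  using assms by (simp add: scalar_prod_def atLeast0LessThan)

lemma gram_inj:
  fixes B :: "'n::finite op \<Rightarrow> 'n op \<Rightarrow> complex" and X :: "nat \<Rightarrow> 'n op"
  assumes lin_r: "\<And>Y c. B Y (\<Sum>j<m. c j *: X j) = (\<Sum>j<m. c j * B Y (X j))"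
      and lin_l: "\<And>Y c. B (\<Sum>j<m. c j *: X j) Y = (\<Sum>j<m. cnj (c j) * B (X j) Y)"
      and pd: "\<And>Z. B Z Z = 0 \<Longrightarrow> Z = 0"
      and ind: "\<And>c. (\<Sum>j<m. c j *: X j) = 0 \<Longrightarrow> \<forall>j<m. c j = 0"
      and v: "v \<in> carrier_vec m" and Mv: "mat m m (\<lambda>(i,j). B (X i) (X j)) *\<^sub>v v = 0\<^sub>v m"
  shows "v = 0\<^sub>v m"
proof -
  define c where "c j = vec_index v j" for j
  define Z where "Z = (\<Sum>j<m. c j *: X j)"
  have BZ: "B (X i) Z = 0" if i: "i < m" for i
  proof -
    have "vec_index (mat m m (\<lambda>(i,j). B (X i) (X j)) *\<^sub>v v) i = (\<Sum>k<m. B (X i) (X k) * c k)"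
      using v i by (simp add: scalar_prod_def atLeast0LessThan c_def)
    also have "\<dots> = B (X i) Z" unfolding Z_def lin_r by (simp add: mult.commute)
    finally show ?thesis using Mv i by simp
  qed
  have "B Z Z = (\<Sum>j<m. cnj (c j) * B (X j) Z)" using lin_l[of c Z] unfolding Z_def by simp
  also have "\<dots> = 0" using BZ by simp
  finally have "Z = 0" by (rule pd)
  hence "\<forall>j<m. c j = 0" unfolding Z_def by (rule ind)
  thus ?thesis using v by (intro eq_vecI) (auto simp: c_def)
qed

lemma re_id: "complex_of_real (Re z) = (z + cnj z) / 2"
  by (simp add: complex_eq_iff)
lemma im_id: "complex_of_real (Im z) = (z - cnj z) / (2 * \<i>)"
  by (simp add: complex_diff_cnj algebra_simps)

lemma cind:
  fixes D :: "nat \<Rightarrow> 'n::finite op"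
  assumes herm: "\<forall>j<r. hermitian_op (D j)"
    and ind: "\<forall>c::nat\<Rightarrow>real. (\<Sum>j<r. c j *\<^sub>R D j) = 0 \<longrightarrow> (\<forall>j<r. c j = 0)"
    and S: "(\<Sum>j<r. v j *: D j) = 0"
  shows "\<forall>j<r. v j = 0"
proof -
  have "op_adj (\<Sum>j<r. v j *: D j) = (\<Sum>j<r. cnj (v j) *: D j)"
    unfolding op_adj_sum op_adj_smult using herm by (intro sum.cong) (auto simp: hermitian_op_def)
  hence S2: "(\<Sum>j<r. cnj (v j) *: D j) = 0" using S by simp
  have "(\<Sum>j<r. Re (v j) *\<^sub>R D j) = (1/2) *: ((\<Sum>j<r. v j *: D j) + (\<Sum>j<r. cnj (v j) *: D j))"
    by (rule op_eqI) (simp add: scaleR_op re_id sum_distrib_left sum.distrib[symmetric] algebra_simps add_divide_distrib)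
  hence "(\<Sum>j<r. Re (v j) *\<^sub>R D j) = 0" using S S2 by simp
  hence re: "\<forall>j<r. Re (v j) = 0" using ind[THEN spec[where x="\<lambda>j. Re (v j)"]] by simp
  have "(\<Sum>j<r. Im (v j) *\<^sub>R D j) = (1/(2 * \<i>)) *: ((\<Sum>j<r. v j *: D j) - (\<Sum>j<r. cnj (v j) *: D j))"
    by (rule op_eqI) (simp add: scaleR_op im_id sum_distrib_left sum_subtractf[symmetric] algebra_simps diff_divide_distrib)
  hence "(\<Sum>j<r. Im (v j) *\<^sub>R D j) = 0" using S S2 by simp
  hence im: "\<forall>j<r. Im (v j) = 0" using ind[THEN spec[where x="\<lambda>j. Im (v j)"]] by simp
  show ?thesis using re im by (simp add: complex_eq_iff)
qed

lemma Sab_pos: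
  assumes sp: "strictly_positive \<rho>" and ab: "0 \<le> a" "0 \<le> b" "0 < a + b" and Y: "Y \<noteq> 0"
  shows "0 < Re (ip Y (Sab (complex_of_real a) (complex_of_real b) \<rho> Y))"
proof -
  have p: "0 < Re (ip Y (\<rho> ** Y))" and q: "0 < Re (ip Y (Y ** \<rho>))"
    using pos1[OF sp Y] pos2[OF sp Y] by auto
  have "ip Y (Sab (complex_of_real a) (complex_of_real b) \<rho> Y)
      = complex_of_real a * ip Y (\<rho> ** Y) + complex_of_real b * ip Y (Y ** \<rho>)"
    by (simp add: Sab_def ip_add_right ip_smult_right)
  hence "Re (ip Y (Sab (complex_of_real a) (complex_of_real b) \<rho> Y))
      = a * Re (ip Y (\<rho> ** Y)) + b * Re (ip Y (Y ** \<rho>))" by simp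
  moreover have "0 < a * Re (ip Y (\<rho> ** Y)) + b * Re (ip Y (Y ** \<rho>))"
  proof (cases "0 < a")
    case True
    thus ?thesis using p q ab by (simp add: add_pos_nonneg)
  next
    case False
    hence "0 < b" using ab by simp
    thus ?thesis using p q ab by (simp add: add_nonneg_pos)
  qed
  ultimately show ?thesis by simp
qed

lemma Sab_sum: "Sab a b \<rho> (\<Sum>j\<in>S. c j *: X j) = (\<Sum>j\<in>S. c j *: Sab a b \<rho> (X j))"
proof (cases "finite S")
  case True
  show ?thesis by (rule lin_sum[OF Sab_add Sab_smult True])
qed simp

lemma bt_sum:
  assumes sp: "strictly_positive \<rho>" and b: "0 \<le> \<beta>" "\<beta> \<le> 1"
  shows "beta_transform \<beta> \<rho> (\<Sum>j\<in>S. c j *: X j) = (\<Sum>j\<in>S. c j *: beta_transform \<beta> \<rho> (X j))"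
proof (cases "finite S")
  case True
  show ?thesis by (rule lin_sum[OF bt_add[OF sp b] bt_smult[OF sp b] True])
next
  case False
  have "beta_transform \<beta> \<rho> 0 = 0" using bt_smult[OF sp b, of 0 0] by simp
  thus ?thesis using False by simp
qed

lemma comm_sum:
  assumes sp: "strictly_positive \<rho>"
  shows "comm_op \<rho> (\<Sum>j\<in>S. c j *: X j) = (\<Sum>j\<in>S. c j *: comm_op \<rho> (X j))"
proof (cases "finite S")
  case True
  show ?thesis by (rule lin_sum[OF comm_add[OF sp] comm_smult[OF sp] True])
qed (simp add: comm_zero[OF sp])

definition cnjM :: "complex mat \<Rightarrow> complex mat" where "cnjM A = map_mat cnj A"

lemma cnjM_mult:
  assumes "A \<in> carrier_mat nr n" "B \<in> carrier_mat n nc"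
  shows "cnjM (A * B) = cnjM A * cnjM B"
  by (rule eq_matI) (use assms in \<open>auto simp: cnjM_def scalar_prod_def\<close>)

lemma cnjM_one: "cnjM (1\<^sub>m n) = 1\<^sub>m n"
  by (rule eq_matI) (auto simp: cnjM_def)

lemma real_entry: "cnjM A = A \<Longrightarrow> i < dim_row A \<Longrightarrow> j < dim_col A \<Longrightarrow> cnj (A $$ (i,j)) = A $$ (i,j)"
  by (metis cnjM_def index_map_mat(1))

lemma cnj_id_Re: "cnj z = z \<Longrightarrow> complex_of_real (Re z) = z"
  by (simp add: complex_eq_iff)

theorem lemma4:
  fixes \<rho> :: "real^'d \<Rightarrow> complex^'n^'n"
    and \<Theta> :: "(real^'d) set"
    and \<theta>0 :: "real^'d"
    and \<rho>' :: "real^'d \<Rightarrow> complex^'n^'n"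
    and idx :: "nat \<Rightarrow> 'd"
    and d r :: nat
    and D :: "nat \<Rightarrow> complex^'n^'n"
    and \<beta> :: real
  assumes "open \<Theta>" and "\<theta>0 \<in> \<Theta>"
    and "\<forall>\<theta>\<in>\<Theta>. density_op (\<rho> \<theta>)"
    and "\<rho> differentiable_on \<Theta>"
    and "(\<rho> has_derivative \<rho>') (at \<theta>0)"
    and "strictly_positive (\<rho> \<theta>0)"
    and "d = CARD('d)" and "bij_betw idx {..<d} UNIV"
    and "d \<le> r"
    and "\<forall>j<r. hermitian_op (D j)"
    and "\<forall>c::nat \<Rightarrow> real. (\<Sum>j<r. c j *\<^sub>R D j) = 0 \<longrightarrow> (\<forall>j<r. c j = 0)"
    and "\<forall>c::nat \<Rightarrow> real. \<exists>c'::nat \<Rightarrow> real.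
           comm_op (\<rho> \<theta>0) (\<Sum>j<r. c j *\<^sub>R D j) = (\<Sum>j<r. c' j *\<^sub>R D j)"
    and "\<forall>i<d. D i = SLD (\<rho> \<theta>0) (\<rho>' (axis (idx i) 1))"
    and "0 \<le> \<beta>" and "\<beta> \<le> 1"
  shows
    "let \<rho>0 = \<rho> \<theta>0;
         \<Sigma> = Matrix.mat r r (\<lambda>(i,j). trace (\<rho>0 ** D j ** D i));
         R = minv (ReM \<Sigma>) * \<Sigma> * minv (ReM \<Sigma>);
         R1 = Matrix.mat d d (\<lambda>(i,j). R $$ (i,j));
         R2 = Matrix.mat (r - d) d (\<lambda>(i,j). R $$ (d + i, j));
         R3 = Matrix.mat (r - d) (r - d) (\<lambda>(i,j). R $$ (d + i, d + j));
         Db = (\<lambda>i. beta_transform \<beta> \<rho>0 (D i));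
         Jt = Matrix.mat r r (\<lambda>(i,j). beta_ip \<beta> \<rho>0 (Db i) (Db j));
         Lb = (\<lambda>i. beta_logder \<beta> \<rho>0 (\<rho>' (axis (idx i) 1)));
         J = Matrix.mat d d (\<lambda>(i,j). beta_ip \<beta> \<rho>0 (Lb i) (Lb j))
     in mat_inverse Jt = Some (beta_part \<beta> R)
        \<and> mat_inverse (beta_part \<beta> R3) \<noteq> None
        \<and> mat_inverse J = Some (beta_part \<beta> R1
              - adjM (beta_part \<beta> R2) * minv (beta_part \<beta> R3) * beta_part \<beta> R2)"
proof -
  note herm = assms(10) and indR = assms(11) and inv = assms(12) and sld = assms(13)
  have b: "0 \<le> \<beta>" "\<beta> \<le> 1" using assms(14,15) by auto
  define \<rho>0 where "\<rho>0 = \<rho> \<theta>0"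
  have sp: "strictly_positive \<rho>0" using assms(6) \<rho>0_def by simp
  have Dh: "op_adj (D j) = D j" if "j < r" for j using herm that by (simp add: hermitian_op_def)
  define T where "T = beta_transform \<beta> \<rho>0"
  define Db where "Db = (\<lambda>i. T (D i))"
  define g where "g = (\<lambda>X Y. (1/2) * ip X (Sab 1 1 \<rho>0 Y))"
  define Sg where "Sg = Matrix.mat r r (\<lambda>(i,j). trace (\<rho>0 ** D j ** D i))"
  have Sg_idx: "Sg $$ (k,l) = trace (\<rho>0 ** D l ** D k)" if "k < r" "l < r" for k l
    using that by (simp add: Sg_def)
  have tr1: "trace (D k ** (\<rho>0 ** D l)) = Sg $$ (k,l)" if "k < r" "l < r" for k l
    using that by (simp add: Sg_idx trace_mul_sym[of "D k"])
  have tr2: "trace (D k ** (D l ** \<rho>0)) = cnj (Sg $$ (k,l))" if "k < r" "l < r" for k l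
  proof -
    have "op_adj (\<rho>0 ** D l ** D k) = D k ** (D l ** \<rho>0)"
      using sp that by (simp add: op_adj_mm Dh strictly_positive_def hermitian_op_def)
    thus ?thesis using that by (metis Sg_idx trace_adj)
  qed
  have Sg_herm: "Sg $$ (l,k) = cnj (Sg $$ (k,l))" if "k < r" "l < r" for k l
  proof -
    have "cnj (Sg $$ (k,l)) = trace (D k ** (D l ** \<rho>0))" using tr2 that by simp
    also have "\<dots> = trace (\<rho>0 ** (D k ** D l))" by (simp add: matrix_mul_assoc trace_mul_sym[of "D k ** D l"])
    also have "\<dots> = Sg $$ (l,k)" using that by (simp add: Sg_idx matrix_mul_assoc)
    finally show ?thesis by simp
  qed
  have ipD: "ip (D k) Y = trace (D k ** Y)" if "k < r" for k Y using that by (simp add: ip_def Dh)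
  have gD: "g (D k) (D l) = complex_of_real (Re (Sg $$ (k,l)))" if "k < r" "l < r" for k l
    using that by (simp add: g_def ipD Sab_def mm_add_right trace_add tr1 tr2 re_id)
  have gC: "g (D k) (comm_op \<rho>0 (D l)) = complex_of_real (Im (Sg $$ (k,l)))" if "k < r" "l < r" for k l
    using that by (simp add: g_def ipD comm_eq[OF sp] mm_smult_right trace_smult mm_diff_right trace_sub tr1 tr2 im_id field_simps)
  have g_sum_r: "g X (\<Sum>j\<in>S. c j *: Y j) = (\<Sum>j\<in>S. c j * g X (Y j))" for X S c Y
    by (simp add: g_def Sab_sum ip_sum_right ip_smult_right sum_distrib_left algebra_simps)
  have g_sum_l: "g (\<Sum>j\<in>S. c j *: Y j) Z = (\<Sum>j\<in>S. cnj (c j) * g (Y j) Z)" for Z S c Y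
    by (simp add: g_def ip_sum_left ip_smult_left sum_distrib_left algebra_simps)
  have "\<forall>l. \<exists>c'::nat \<Rightarrow> real. l < r \<longrightarrow> comm_op \<rho>0 (D l) = (\<Sum>m<r. c' m *\<^sub>R D m)"
  proof
    fix l
    show "\<exists>c'::nat \<Rightarrow> real. l < r \<longrightarrow> comm_op \<rho>0 (D l) = (\<Sum>m<r. c' m *\<^sub>R D m)"
    proof (cases "l < r")
      case True
      obtain c' where c': "comm_op \<rho>0 (\<Sum>j<r. (if j = l then 1 else 0) *\<^sub>R D j) = (\<Sum>j<r. c' j *\<^sub>R D j)"
        using inv[THEN spec[where x="\<lambda>j. if j = l then 1 else 0"]] unfolding \<rho>0_def[symmetric] by blast
      have "(\<Sum>j<r. (if j = l then (1::real) else 0) *\<^sub>R D j) = D l"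
      proof -
        have e: "(if j = l then (1::real) else 0) *\<^sub>R D j = (if j = l then D j else 0)" for j by simp
        show ?thesis using True by (simp add: e)
      qed
      thus ?thesis using c' by auto
    qed simp
  qed
  then obtain a :: "nat \<Rightarrow> nat \<Rightarrow> real" where ca: "\<And>l. l < r \<Longrightarrow> comm_op \<rho>0 (D l) = (\<Sum>m<r. a l m *\<^sub>R D m)"
    by metis
  have ImS: "complex_of_real (Im (Sg $$ (k,l))) = (\<Sum>m<r. complex_of_real (Re (Sg $$ (k,m))) * complex_of_real (a l m))"
    if "k < r" "l < r" for k l
  proof -
    have "complex_of_real (Im (Sg $$ (k,l))) = g (D k) (\<Sum>m<r. complex_of_real (a l m) *: D m)"
      using that by (simp add: gC[symmetric] ca scaleR_op)
    also have "\<dots> = (\<Sum>m<r. complex_of_real (a l m) * g (D k) (D m))" by (rule g_sum_r)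
    also have "\<dots> = (\<Sum>m<r. complex_of_real (Re (Sg $$ (k,m))) * complex_of_real (a l m))"
      using that by (intro sum.cong) (auto simp: gD)
    finally show ?thesis .
  qed
  define G where "G = ReM Sg"
  define A where "A = Matrix.mat r r (\<lambda>(m,l). complex_of_real (a l m))"
  have Sgc: "Sg \<in> carrier_mat r r" by (simp add: Sg_def)
  have Gc: "G \<in> carrier_mat r r" by (simp add: G_def ReM_def Sg_def)
  have Ac: "A \<in> carrier_mat r r" by (simp add: A_def)
  have G_idx: "G $$ (k,l) = complex_of_real (Re (Sg $$ (k,l)))" if "k < r" "l < r" for k l
    using that by (simp add: G_def ReM_def Sg_def)
  have GA: "ImM Sg = G * A"
  proof (rule eq_matI)
    fix k l assume kl: "k < dim_row (G * A)" "l < dim_col (G * A)"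
    hence kl': "k < r" "l < r" using Gc Ac by auto
    have "(G * A) $$ (k,l) = (\<Sum>m<r. G $$ (k,m) * A $$ (m,l))" by (rule mat_mult_index[OF Gc Ac kl'])
    also have "\<dots> = (\<Sum>m<r. complex_of_real (Re (Sg $$ (k,m))) * complex_of_real (a l m))"
      using kl' by (intro sum.cong) (auto simp: G_idx A_def)
    also have "\<dots> = complex_of_real (Im (Sg $$ (k,l)))" using ImS[OF kl'] by simp
    finally show "ImM Sg $$ (k,l) = (G * A) $$ (k,l)" using kl' by (simp add: ImM_def Sg_def)
  qed (use Gc Ac in \<open>auto simp: ImM_def Sg_def\<close>)
  have ReS: "Re (Sg $$ (l,k)) = Re (Sg $$ (k,l))" if "k < r" "l < r" for k l
    using Sg_herm[OF that] by simp
  have ImS': "Im (Sg $$ (l,k)) = - Im (Sg $$ (k,l))" if "k < r" "l < r" for k l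
    using Sg_herm[OF that] by simp
  have Gsym: "transpose_mat G = G"
    by (rule eq_matI) (use Gc in \<open>auto simp: G_idx ReS\<close>)
  have AtG: "transpose_mat A * G = - (G * A)"
  proof (rule eq_matI)
    fix k l assume kl: "k < dim_row (- (G * A))" "l < dim_col (- (G * A))"
    hence kl': "k < r" "l < r" using Gc Ac by auto
    have "(transpose_mat A * G) $$ (k,l) = (\<Sum>m<r. transpose_mat A $$ (k,m) * G $$ (m,l))"
      by (rule mat_mult_index[OF _ Gc kl']) (use Ac in simp)
    also have "\<dots> = (\<Sum>m<r. complex_of_real (Re (Sg $$ (l,m))) * complex_of_real (a k m))"
      using kl' by (intro sum.cong) (auto simp: G_idx A_def ReS[of _ l])
    also have "\<dots> = complex_of_real (Im (Sg $$ (l,k)))" using ImS[of l k] kl' by simp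
    also have "\<dots> = - complex_of_real (Im (Sg $$ (k,l)))" using ImS'[OF kl'] by simp
    also have "\<dots> = - ImM Sg $$ (k,l)" using kl' by (simp add: ImM_def Sg_def)
    finally show "(transpose_mat A * G) $$ (k,l) = (- (G * A)) $$ (k,l)" using kl' Gc Ac by (simp add: GA)
  qed (use Gc Ac in auto)
  have Sg_dec: "Sg = G + (\<i> \<cdot>\<^sub>m (G * A))"
  proof (rule eq_matI)
    fix k l assume kl: "k < dim_row (G + (\<i> \<cdot>\<^sub>m (G * A)))" "l < dim_col (G + (\<i> \<cdot>\<^sub>m (G * A)))"
    hence kl': "k < r" "l < r" using Gc Ac by auto
    have "(G * A) $$ (k,l) = complex_of_real (Im (Sg $$ (k,l)))"
      using kl' by (simp add: GA[symmetric] ImM_def Sg_def)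
    thus "Sg $$ (k,l) = (G + (\<i> \<cdot>\<^sub>m (G * A))) $$ (k,l)"
      using kl' Gc Ac by (simp add: G_idx complex_eq_iff)
  qed (use Gc Ac Sgc in auto)
  have cG: "cnjM G = G" by (rule eq_matI) (use Gc in \<open>auto simp: cnjM_def G_idx\<close>)
  have cA: "cnjM A = A" by (rule eq_matI) (auto simp: cnjM_def A_def)
  have G_gram: "G = Matrix.mat r r (\<lambda>(i,j). g (D i) (D j))"
    by (rule eq_matI) (use Gc in \<open>auto simp: G_idx gD\<close>)
  have g_pd: "Z = 0" if "g Z Z = 0" for Z
  proof (rule ccontr)
    assume "Z \<noteq> 0"
    hence "0 < Re (ip Z (Sab (complex_of_real 1) (complex_of_real 1) \<rho>0 Z))"
      by (intro Sab_pos[OF sp]) auto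
    thus False using that by (simp add: g_def)
  qed
  have cindD: "\<forall>j<r. c j = 0" if "(\<Sum>j<r. c j *: D j) = 0" for c
    by (rule cind[OF herm indR that])
  have Ginj: "v = 0\<^sub>v r" if "v \<in> carrier_vec r" "G *\<^sub>v v = 0\<^sub>v r" for v
    by (rule gram_inj[where B=g and X=D and m=r]) (use that g_pd cindD in \<open>auto simp: g_sum_r g_sum_l G_gram[symmetric]\<close>)
  obtain H where Hc: "H \<in> carrier_mat r r" and GH: "G * H = 1\<^sub>m r" and GinvH: "mat_inverse G = Some H"
    using inj_mat_inverse[OF Gc Ginj] by blast
  have HG: "H * G = 1\<^sub>m r" by (rule mat_mult_left_right_inverse[OF Gc Hc GH])
  have minvG: "minv (ReM Sg) = H" using GinvH by (simp add: minv_def G_def)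
  have cHc: "cnjM H \<in> carrier_mat r r" using Hc by (simp add: cnjM_def)
  have cH: "cnjM H = H"
  proof -
    have "G * cnjM H = cnjM (G * H)" using cG cnjM_mult[OF Gc Hc] by simp
    also have "\<dots> = 1\<^sub>m r" by (simp add: GH cnjM_one)
    finally have "mat_inverse G = Some (cnjM H)" by (rule mat_inverse_SomeI[OF Gc cHc])
    thus ?thesis using GinvH by simp
  qed
  have Htc: "transpose_mat H \<in> carrier_mat r r" using Hc by simp
  have Hsym: "transpose_mat H = H"
  proof -
    have "transpose_mat H * G = 1\<^sub>m r"
      using transpose_mult[OF Gc Hc] GH Gsym by simp
    hence "G * transpose_mat H = 1\<^sub>m r" by (rule mat_mult_left_right_inverse[OF Htc Gc])
    hence "mat_inverse G = Some (transpose_mat H)" by (rule mat_inverse_SomeI[OF Gc Htc])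
    thus ?thesis using GinvH by simp
  qed
  have AHc: "A * H \<in> carrier_mat r r" using Ac Hc by simp
  have HAt: "H * transpose_mat A = - (A * H)"
  proof -
    have Atc: "transpose_mat A \<in> carrier_mat r r" using Ac by simp
    have "H * transpose_mat A = (H * transpose_mat A) * (G * H)" using Hc Atc by (simp add: GH)
    also have "\<dots> = (H * (transpose_mat A * G)) * H"
      using Hc Atc Gc by (simp add: assoc_mult_mat[of _ r r _ r _ r])
    also have "\<dots> = (H * (- (G * A))) * H" by (simp add: AtG)
    also have "\<dots> = - ((H * G) * A * H)"
      using Hc Gc Ac by (simp add: assoc_mult_mat[of _ r r _ r _ r])
    also have "\<dots> = - (A * H)" using Ac by (simp add: HG)
    finally show ?thesis .
  qed
  have AHanti: "transpose_mat (A * H) = - (A * H)"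
    using transpose_mult[OF Ac Hc] Hsym HAt by simp
  have cAH: "cnjM (A * H) = A * H" using cnjM_mult[OF Ac Hc] cA cH by simp
  have R_eq: "minv (ReM Sg) * Sg * minv (ReM Sg) = H + (\<i> \<cdot>\<^sub>m (A * H))"
  proof -
    have "H * Sg = H * G + H * (\<i> \<cdot>\<^sub>m (G * A))"
      unfolding Sg_dec by (rule mult_add_distrib_mat[of _ r r]) (use Hc Gc Ac in auto)
    also have "H * (\<i> \<cdot>\<^sub>m (G * A)) = \<i> \<cdot>\<^sub>m (H * (G * A))"
      by (rule mult_smult_distrib[of _ r r _ r]) (use Hc Gc Ac in auto)
    also have "H * (G * A) = A"
    proof -
      have "H * (G * A) = (H * G) * A" by (rule assoc_mult_mat[symmetric, of _ r r _ r _ r]) (use Hc Gc Ac in auto)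
      thus ?thesis using Ac by (simp add: HG)
    qed
    finally have "H * Sg = 1\<^sub>m r + \<i> \<cdot>\<^sub>m A" by (simp add: HG)
    hence "H * Sg * H = (1\<^sub>m r + \<i> \<cdot>\<^sub>m A) * H" by simp
    also have "\<dots> = H + \<i> \<cdot>\<^sub>m (A * H)"
      using Hc Ac by (simp add: add_mult_distrib_mat[of _ r r] mult_smult_assoc_mat[of _ r r])
    finally show ?thesis by (simp add: minvG)
  qed
  define R where "R = minv (ReM Sg) * Sg * minv (ReM Sg)"
  have R_eq': "R = H + (\<i> \<cdot>\<^sub>m (A * H))" using R_eq by (simp add: R_def)
  have Rc: "R \<in> carrier_mat r r" using Hc AHc by (simp add: R_eq')
  have H_im: "Im (H $$ (i,j)) = 0" if "i < r" "j < r" for i j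
    using real_entry[OF cH, of i j] that Hc by (simp add: complex_eq_iff)
  have AH_im: "Im ((A * H) $$ (i,j)) = 0" if "i < r" "j < r" for i j
    using real_entry[OF cAH, of i j] that Ac Hc by (simp add: complex_eq_iff)
  have R_idx: "R $$ (i,j) = H $$ (i,j) + \<i> * (A * H) $$ (i,j)" if "i < r" "j < r" for i j
    using that Hc AHc Ac by (simp add: R_eq' carrier_matD)
  have ReM_R: "ReM R = H"
  proof (rule eq_matI)
    fix i j assume ij: "i < dim_row H" "j < dim_col H"
    hence ij': "i < r" "j < r" using Hc by auto
    show "ReM R $$ (i,j) = H $$ (i,j)"
      using ij' Rc H_im[OF ij'] AH_im[OF ij'] by (simp add: ReM_def R_idx complex_eq_iff)
  qed (use Rc Hc in \<open>auto simp: ReM_def\<close>)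
  have ImM_R: "ImM R = A * H"
  proof (rule eq_matI)
    fix i j assume ij: "i < dim_row (A * H)" "j < dim_col (A * H)"
    hence ij': "i < r" "j < r" using AHc by auto
    show "ImM R $$ (i,j) = (A * H) $$ (i,j)"
      using ij' Rc H_im[OF ij'] AH_im[OF ij'] by (simp add: ImM_def R_idx complex_eq_iff)
  qed (use Rc AHc in \<open>auto simp: ImM_def\<close>)
  define c where "c = complex_of_real \<beta> * \<i>"
  define P where "P = beta_part \<beta> R"
  have P_eq: "P = H + c \<cdot>\<^sub>m (A * H)" by (simp add: P_def beta_part_def ReM_R ImM_R c_def)
  have Pc: "P \<in> carrier_mat r r" using Hc AHc by (simp add: P_eq)
  define Jt where "Jt = Matrix.mat r r (\<lambda>(i,j). beta_ip \<beta> \<rho>0 (Db i) (Db j))"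
  have Jtc: "Jt \<in> carrier_mat r r" by (simp add: Jt_def)
  have bip: "beta_ip \<beta> \<rho>0 X (Db j) = g X (D j)" for X j
    unfolding beta_ip_Sab Db_def T_def bt_Sab[OF sp b] g_def by simp
  have Jt_idx: "Jt $$ (i,j) = g (Db i) (D j)" if "i < r" "j < r" for i j
    using that by (simp add: Jt_def bip)
  have F5: "(\<Sum>j<r. ((if k = j then 1 else 0) + c * complex_of_real (a k j)) *: Db j) = D k" if k: "k < r" for k
  proof -
    have "(\<Sum>j<r. ((if k = j then 1 else 0) + c * complex_of_real (a k j)) *: Db j)
       = (\<Sum>j<r. (if k = j then 1 else 0) *: Db j) + c *: (\<Sum>j<r. complex_of_real (a k j) *: Db j)"
      by (simp add: add_smult sum.distrib smult_sum smult_smult)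
    also have "(\<Sum>j<r. (if k = j then 1 else 0) *: Db j) = Db k"
    proof -
      have e: "(if k = j then 1 else 0) *: Db j = (if k = j then Db j else 0)" for j by simp
      show ?thesis using k by (simp add: e)
    qed
    also have "(\<Sum>j<r. complex_of_real (a k j) *: Db j) = T (\<Sum>j<r. complex_of_real (a k j) *: D j)"
      by (simp add: Db_def T_def bt_sum[OF sp b])
    also have "(\<Sum>j<r. complex_of_real (a k j) *: D j) = comm_op \<rho>0 (D k)"
      using k by (simp add: ca scaleR_op)
    also have "T (comm_op \<rho>0 (D k)) = comm_op \<rho>0 (Db k)"
      by (simp add: T_def Db_def bt_comm[OF sp b])
    also have "Db k + c *: comm_op \<rho>0 (Db k) = D k"
      unfolding Db_def T_def c_def by (rule bt_eq[OF sp b])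
    finally show ?thesis .
  qed
  define Ks where "Ks = 1\<^sub>m r - c \<cdot>\<^sub>m transpose_mat A"
  have Ksc: "Ks \<in> carrier_mat r r" unfolding Ks_def by (rule minus_carrier_mat) (use Ac in simp)
  have KsJt: "Ks * Jt = G"
  proof (rule eq_matI)
    fix k l assume kl: "k < dim_row G" "l < dim_col G"
    hence kl': "k < r" "l < r" using Gc by auto
    have "(Ks * Jt) $$ (k,l) = (\<Sum>j<r. Ks $$ (k,j) * Jt $$ (j,l))" by (rule mat_mult_index[OF Ksc Jtc kl'])
    also have "\<dots> = (\<Sum>j<r. cnj ((if k = j then 1 else 0) + c * complex_of_real (a k j)) * g (Db j) (D l))"
      using kl' Ac by (intro sum.cong) (auto simp: Ks_def Jt_idx A_def c_def)
    also have "\<dots> = g (\<Sum>j<r. ((if k = j then 1 else 0) + c * complex_of_real (a k j)) *: Db j) (D l)"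
      by (rule g_sum_l[symmetric])
    also have "\<dots> = G $$ (k,l)" using kl' by (simp add: F5 gD G_idx)
    finally show "(Ks * Jt) $$ (k,l) = G $$ (k,l)" .
  qed (use Ksc Jtc Gc in auto)
  have P_Ks: "P = H * Ks"
  proof -
    have Atc: "transpose_mat A \<in> carrier_mat r r" using Ac by simp
    have "H * Ks = H * 1\<^sub>m r - H * (c \<cdot>\<^sub>m transpose_mat A)"
      unfolding Ks_def by (rule mult_minus_distrib_mat[of _ r r]) (use Hc Atc in auto)
    also have "H * (c \<cdot>\<^sub>m transpose_mat A) = c \<cdot>\<^sub>m (H * transpose_mat A)"
      by (rule mult_smult_distrib[of _ r r _ r]) (use Hc Atc in auto)
    also have "H * 1\<^sub>m r = H" using Hc by simp
    also have "H - c \<cdot>\<^sub>m (H * transpose_mat A) = P"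
      unfolding HAt P_eq by (rule eq_matI) (use Hc AHc in auto)
    finally show ?thesis by simp
  qed
  have PJt: "P * Jt = 1\<^sub>m r"
  proof -
    have "P * Jt = H * (Ks * Jt)" unfolding P_Ks by (rule assoc_mult_mat[of _ r r _ r _ r]) (use Hc Ksc Jtc in auto)
    thus ?thesis by (simp add: KsJt HG)
  qed
  have JtP: "Jt * P = 1\<^sub>m r" by (rule mat_mult_left_right_inverse[OF Pc Jtc PJt])
  have inv1: "mat_inverse Jt = Some P" by (rule mat_inverse_SomeI[OF Jtc Pc JtP])
  have dr: "d \<le> r" using assms(9) .
  define Lb where "Lb = (\<lambda>i. beta_logder \<beta> \<rho>0 (\<rho>' (axis (idx i) 1)))"
  have LbDb: "Lb i = Db i" if i: "i < d" for i
  proof -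
    let ?dR = "\<rho>' (axis (idx i) 1)"
    have Di: "D i = beta_logder 0 \<rho>0 ?dR" using sld i \<rho>0_def by simp
    have b0: "(0::real) \<le> 0" "(0::real) \<le> 1" by auto
    have S0: "Sab (complex_of_real ((1 + 0)/2)) (complex_of_real ((1 - 0)/2)) \<rho>0 (D i) = ?dR"
      using bl_iff[OF sp b0, of ?dR "D i"] Di by simp
    have E2: "(1/2) *: Sab 1 1 \<rho>0 (D i) = ?dR"
      using S0 Sab_half[of 0 \<rho>0 "D i"] by simp
    have E1: "Sab (complex_of_real ((1 + \<beta>)/2)) (complex_of_real ((1 - \<beta>)/2)) \<rho>0 (Db i) = (1/2) *: Sab 1 1 \<rho>0 (D i)"
      unfolding Sab_half Db_def T_def bt_Sab[OF sp b] ..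
    show ?thesis unfolding Lb_def by (subst bl_iff[OF sp b]) (rule trans[OF E1 E2])
  qed
  define J where "J = Matrix.mat d d (\<lambda>(i,j). beta_ip \<beta> \<rho>0 (Lb i) (Lb j))"
  have J_eq: "J = Matrix.mat d d (\<lambda>(i,j). Jt $$ (i,j))"
    by (rule eq_matI) (use dr in \<open>auto simp: J_def Jt_def LbDb\<close>)
  have J_gram: "J = Matrix.mat d d (\<lambda>(i,j). beta_ip \<beta> \<rho>0 (Db i) (Db j))"
    by (rule eq_matI) (auto simp: J_def LbDb)
  have bip_sum_r: "beta_ip \<beta> \<rho>0 Y (\<Sum>j\<in>S. cc j *: X j) = (\<Sum>j\<in>S. cc j * beta_ip \<beta> \<rho>0 Y (X j))" for Y S cc X
    by (simp add: beta_ip_Sab Sab_sum ip_sum_right ip_smult_right sum_distrib_left algebra_simps)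
  have bip_sum_l: "beta_ip \<beta> \<rho>0 (\<Sum>j\<in>S. cc j *: X j) Y = (\<Sum>j\<in>S. cnj (cc j) * beta_ip \<beta> \<rho>0 (X j) Y)" for Y S cc X
    by (simp add: beta_ip_Sab ip_sum_left ip_smult_left sum_distrib_left algebra_simps)
  have bip_pd: "Z = 0" if "beta_ip \<beta> \<rho>0 Z Z = 0" for Z
  proof (rule ccontr)
    assume "Z \<noteq> 0"
    hence "0 < Re (ip Z (Sab (complex_of_real (1 + \<beta>)) (complex_of_real (1 - \<beta>)) \<rho>0 Z))"
      by (intro Sab_pos[OF sp]) (use b in auto)
    moreover have "ip Z (Sab (complex_of_real (1 + \<beta>)) (complex_of_real (1 - \<beta>)) \<rho>0 Z) = 0"
      using that unfolding beta_ip_Sab by simp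
    ultimately show False by simp
  qed
  have Db_ind: "\<forall>j<d. cc j = 0" if S: "(\<Sum>j<d. cc j *: Db j) = 0" for cc
  proof -
    have "T (\<Sum>j<d. cc j *: D j) = 0" using S by (simp add: T_def Db_def bt_sum[OF sp b])
    hence S1: "(\<Sum>j<d. cc j *: D j) = 0" unfolding T_def by (rule bt_zero_imp[OF sp b])
    define c' where "c' j = (if j < d then cc j else 0)" for j
    have "(\<Sum>j<r. c' j *: D j) = (\<Sum>j<d. c' j *: D j)"
      by (rule sum.mono_neutral_right) (use dr in \<open>auto simp: c'_def\<close>)
    also have "\<dots> = (\<Sum>j<d. cc j *: D j)" by (rule sum.cong) (auto simp: c'_def)
    finally have "(\<Sum>j<r. c' j *: D j) = 0" using S1 by simp
    hence "\<forall>j<r. c' j = 0" by (rule cindD)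
    thus ?thesis using dr unfolding c'_def by (metis less_le_trans)
  qed
  have Jinj: "v = 0\<^sub>v d" if "v \<in> carrier_vec d" "Matrix.mat d d (\<lambda>(i,j). Jt $$ (i,j)) *\<^sub>v v = 0\<^sub>v d" for v
  proof -
    have Jv: "J *\<^sub>v v = 0\<^sub>v d" using that(2) by (simp add: J_eq)
    show ?thesis
      by (rule gram_inj[where B="beta_ip \<beta> \<rho>0" and X=Db and m=d])
         (use that(1) Jv bip_pd Db_ind in \<open>auto simp: bip_sum_r bip_sum_l J_gram[symmetric]\<close>)
  qed
  define e where "e = r - d"
  have re: "r = d + e" using dr by (simp add: e_def)
  have SC: "mat_inverse (Matrix.mat e e (\<lambda>(i,j). P $$ (d + i, d + j))) \<noteq> None
    \<and> mat_inverse (Matrix.mat d d (\<lambda>(i,j). Jt $$ (i,j))) = Some (Matrix.mat d d (\<lambda>(i,j). P $$ (i,j))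
       - Matrix.mat d e (\<lambda>(i,j). P $$ (i, d + j)) * minv (Matrix.mat e e (\<lambda>(i,j). P $$ (d + i, d + j)))
         * Matrix.mat e d (\<lambda>(i,j). P $$ (d + i, j)))"
    by (rule schur) (use Jtc Pc JtP Jinj re in auto)
  define AH where "AH = A * H"
  have AHc2: "AH \<in> carrier_mat r r" using AHc by (simp add: AH_def)
  have P_eq2: "P = H + c \<cdot>\<^sub>m AH" using P_eq by (simp add: AH_def)
  have AHanti2: "transpose_mat AH = - AH" using AHanti by (simp add: AH_def)
  have AH_im2: "Im (AH $$ (i,j)) = 0" if "i < r" "j < r" for i j using AH_im[OF that] by (simp add: AH_def)
  have P_idx: "P $$ (x,y) = H $$ (x,y) + c * AH $$ (x,y)" if "x < r" "y < r" for x y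
    using that Hc AHc2 by (simp add: P_eq2 carrier_matD)
  have P_herm: "cnj (P $$ (x,y)) = P $$ (y,x)" if xy: "x < r" "y < r" for x y
  proof -
    have "transpose_mat H $$ (x,y) = H $$ (y,x)" using xy Hc by (simp add: carrier_matD)
    hence Hs: "H $$ (y,x) = H $$ (x,y)" using Hsym by simp
    have "transpose_mat AH $$ (x,y) = AH $$ (y,x)" using xy AHc2 by (simp add: carrier_matD)
    moreover have "(- AH) $$ (x,y) = - AH $$ (x,y)" using xy AHc2 by (simp add: carrier_matD)
    ultimately have As: "AH $$ (y,x) = - AH $$ (x,y)" using AHanti2 by simp
    show ?thesis using xy Hs As H_im[OF xy] AH_im2[OF xy] by (simp add: P_idx c_def complex_eq_iff)
  qed
  have B1: "beta_part \<beta> (Matrix.mat d d (\<lambda>(i,j). R $$ (i,j))) = Matrix.mat d d (\<lambda>(i,j). P $$ (i,j))"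
    by (rule eq_matI) (use dr Rc in \<open>auto simp: P_def beta_part_def ReM_def ImM_def carrier_matD\<close>)
  have B2: "beta_part \<beta> (Matrix.mat e d (\<lambda>(i,j). R $$ (d + i, j))) = Matrix.mat e d (\<lambda>(i,j). P $$ (d + i, j))"
    by (rule eq_matI) (use re Rc in \<open>auto simp: P_def beta_part_def ReM_def ImM_def carrier_matD\<close>)
  have B3: "beta_part \<beta> (Matrix.mat e e (\<lambda>(i,j). R $$ (d + i, d + j))) = Matrix.mat e e (\<lambda>(i,j). P $$ (d + i, d + j))"
    by (rule eq_matI) (use re Rc in \<open>auto simp: P_def beta_part_def ReM_def ImM_def carrier_matD\<close>)
  have B2': "adjM (Matrix.mat e d (\<lambda>(i,j). P $$ (d + i, j))) = Matrix.mat d e (\<lambda>(i,j). P $$ (i, d + j))"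
    by (rule eq_matI) (use re in \<open>auto simp: adjM_def P_herm\<close>)
  have main: "mat_inverse Jt = Some (beta_part \<beta> R)
     \<and> mat_inverse (beta_part \<beta> (Matrix.mat e e (\<lambda>(i,j). R $$ (d + i, d + j)))) \<noteq> None
     \<and> mat_inverse J = Some (beta_part \<beta> (Matrix.mat d d (\<lambda>(i,j). R $$ (i,j)))
          - adjM (beta_part \<beta> (Matrix.mat e d (\<lambda>(i,j). R $$ (d + i, j))))
            * minv (beta_part \<beta> (Matrix.mat e e (\<lambda>(i,j). R $$ (d + i, d + j))))
            * beta_part \<beta> (Matrix.mat e d (\<lambda>(i,j). R $$ (d + i, j))))"
    unfolding B1 B2 B3 B2' J_eq P_def[symmetric] using inv1 SC by simp
  show ?thesis unfolding Let_def
    by (rule main[unfolded J_def Lb_def Jt_def Db_def T_def R_def Sg_def \<rho>0_def e_def])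
qed

end
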